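(* Let $P(t)\in\mathbb{Q}[t]$ be an admissible Hilbert polynomial with Macaulay–Hartshorne expression $\sum_{i=0}^d\binom{t+i}{i+1}-\binom{t+i-e_i}{i+1}$, where $e_0\ge e_1\ge\dots\ge e_d>0$, and Gotzmann expression $\sum_{j=1}^r\binom{t+b_j-(j-1)}{b_j}$, where $b_1\ge b_2\ge\dots\ge b_r\ge0$. Then $r=e_0$ and the nonnegative partition $(b_1,\dots,b_r)$ is conjugate to the partition $(e_1,\dots,e_d)$; that is, for each $1\le i\le d$ exactly $e_i-e_{i+1}$ of the $b_j$ equal $i$ (where $e_{d+1}:=0$), the remaining $b_j$ being $0$.
   Context: Binomial coefficients are polynomials in $t$: $\binom{t+a}{b}=\frac{(t+a)(t+a-1)\cdots(t+a-b+1)}{b!}$ if $b\ge0$, and $0$ if $b<0$. An admissible Hilbert polynomial is the Hilbert polynomial of a nonempty closed subscheme of some projective space over an algebraically closed field; every such polynomial has a unique Macaulay–Hartshorne expression and a unique Gotzmann expression of the forms given. *)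

theory Defs
  imports Complex_Main
begin

definition MH_expr :: "nat \<Rightarrow> (nat \<Rightarrow> nat) \<Rightarrow> rat \<Rightarrow> rat" where
  "MH_expr d e t = (\<Sum>i=0..d. ((t + of_nat i) gchoose (i+1))
                               - ((t + of_nat i - of_nat (e i)) gchoose (i+1)))"

definition Gotz_expr :: "nat \<Rightarrow> (nat \<Rightarrow> nat) \<Rightarrow> rat \<Rightarrow> rat" where
  "Gotz_expr r b t = (\<Sum>j=1..r. (t + of_nat (b j) - (of_nat j - 1)) gchoose (b j))"

end

theory Submission imports Defs begin

lemma chain_le:
  fixes f :: "nat \<Rightarrow> nat"
  assumes "\<forall>j. lo \<le> j \<and> j < hi \<longrightarrow> f (Suc j) \<le> f j" "lo \<le> j" "j \<le> k" "k \<le> hi"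
  shows "f k \<le> f j"
  using assms(3,4)
proof (induction k rule: dec_induct)
  case base then show ?case by simp
next
  case (step n)
  have "f (Suc n) \<le> f n" using assms(1,2) step by auto
  then show ?case using step by auto
qed

lemma mh_term:
  fixes t :: rat
  shows "((t + of_nat i) gchoose (i+1)) - ((t + of_nat i - of_nat e) gchoose (i+1))
     = (\<Sum>j=1..e. (t + of_nat i - of_nat j) gchoose i)"
proof (induction e)
  case 0 then show ?case by simp
next
  case (Suc e)
  have p: "((t + of_nat i - of_nat (Suc e)) + 1) gchoose (Suc i)
     = ((t + of_nat i - of_nat (Suc e)) gchoose i) + ((t + of_nat i - of_nat (Suc e)) gchoose (Suc i))"
    by (rule gbinomial_Suc_Suc)
  have q: "(t + of_nat i - of_nat (Suc e)) + 1 = t + of_nat i - of_nat e" by simp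
  show ?case using Suc p unfolding q by (simp add: sum.cl_ivl_Suc algebra_simps)
qed

lemma gotz_term:
  fixes t :: rat
  shows "(t + of_nat b - (of_nat j - 1)) gchoose b = (\<Sum>i=0..b. (t + of_nat i - of_nat j) gchoose i)"
proof (induction b)
  case 0 then show ?case by simp
next
  case (Suc b)
  have p: "((t + of_nat (Suc b) - of_nat j) + 1) gchoose (Suc b)
     = ((t + of_nat (Suc b) - of_nat j) gchoose b) + ((t + of_nat (Suc b) - of_nat j) gchoose (Suc b))"
    by (rule gbinomial_Suc_Suc)
  have q: "t + of_nat (Suc b) - (of_nat j - 1) = (t + of_nat (Suc b) - of_nat j) + 1" by simp
  have r: "t + of_nat (Suc b) - of_nat j = t + of_nat b - (of_nat j - 1)" by simp
  have "(t + of_nat (Suc b) - (of_nat j - 1)) gchoose (Suc b)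
      = ((t + of_nat b - (of_nat j - 1)) gchoose b) + ((t + of_nat (Suc b) - of_nat j) gchoose (Suc b))"
    unfolding q p unfolding r ..
  then show ?case using Suc by (simp add: sum.cl_ivl_Suc)
qed

lemma gotz_diff_term:
  fixes t :: rat
  shows "((t + of_nat b - (of_nat j - 1)) gchoose b) - ((t - 1 + of_nat b - (of_nat j - 1)) gchoose b)
     = (if b = 0 then 0 else (t + of_nat (b - 1) - (of_nat j - 1)) gchoose (b - 1))"
proof (cases b)
  case 0 then show ?thesis by simp
next
  case (Suc m)
  have p: "((t - 1 + of_nat (Suc m) - (of_nat j - 1)) + 1) gchoose (Suc m)
     = ((t - 1 + of_nat (Suc m) - (of_nat j - 1)) gchoose m) + ((t - 1 + of_nat (Suc m) - (of_nat j - 1)) gchoose (Suc m))"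
    by (rule gbinomial_Suc_Suc)
  have q: "(t - 1 + of_nat (Suc m) - (of_nat j - 1)) + 1 = t + of_nat (Suc m) - (of_nat j - 1)" by simp
  have r: "t - 1 + of_nat (Suc m) - (of_nat j - 1) = t + of_nat m - (of_nat j - 1)" by simp
  show ?thesis using p unfolding q r Suc by simp
qed

lemma prefix_exists:
  fixes b :: "nat \<Rightarrow> nat"
  assumes mono: "\<forall>j. 1 \<le> j \<and> j < r \<longrightarrow> b (Suc j) \<le> b j"
  shows "\<exists>s\<le>r. \<forall>j\<in>{1..r}. (0 < b j \<longleftrightarrow> j \<le> s)"
proof (cases "\<exists>j\<in>{1..r}. 0 < b j")
  case False
  then show ?thesis by (intro exI[of _ 0]) auto
next
  case True
  define P where "P = {j\<in>{1..r}. 0 < b j}"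
  have fin: "finite P" "P \<noteq> {}" using True by (auto simp: P_def)
  define s where "s = Max P"
  have sP: "s \<in> P" using fin s_def Max_in by blast
  have smax: "\<And>j. j \<in> P \<Longrightarrow> j \<le> s" using fin s_def by simp
  show ?thesis
  proof (intro exI[of _ s] conjI ballI)
    show "s \<le> r" using sP by (auto simp: P_def)
    fix j assume j: "j \<in> {1..r}"
    show "0 < b j \<longleftrightarrow> j \<le> s"
    proof
      assume "0 < b j" then show "j \<le> s" using smax j by (auto simp: P_def)
    next
      assume "j \<le> s"
      then have "b s \<le> b j" using chain_le[OF mono, of j s] j sP by (auto simp: P_def)
      then show "0 < b j" using sP by (auto simp: P_def)
    qed
  qed
qed

lemma gotz_delta:
  fixes b :: "nat \<Rightarrow> nat" and t :: rat
  assumes "s \<le> r" "\<forall>j\<in>{1..r}. (0 < b j \<longleftrightarrow> j \<le> s)"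
  shows "Gotz_expr r b t - Gotz_expr r b (t - 1) = Gotz_expr s (\<lambda>j. b j - 1) t"
proof -
  have "Gotz_expr r b t - Gotz_expr r b (t - 1)
     = (\<Sum>j=1..r. (if b j = 0 then 0 else (t + of_nat (b j - 1) - (of_nat j - 1)) gchoose (b j - 1)))"
    unfolding Gotz_expr_def sum_subtractf[symmetric] gotz_diff_term by simp
  also have "\<dots> = (\<Sum>j=1..r. (if j \<le> s then (t + of_nat (b j - 1) - (of_nat j - 1)) gchoose (b j - 1) else 0))"
  proof (intro sum.cong refl)
    fix x assume "x \<in> {1..r}"
    then have "0 < b x \<longleftrightarrow> x \<le> s" using assms(2) by blast
    then show "(if b x = 0 then 0 else (t + of_nat (b x - 1) - (of_nat x - 1)) gchoose (b x - 1))
      = (if x \<le> s then (t + of_nat (b x - 1) - (of_nat x - 1)) gchoose (b x - 1) else 0)" by auto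
  qed
  also have "\<dots> = (\<Sum>j\<in>{j\<in>{1..r}. j \<le> s}. (t + of_nat (b j - 1) - (of_nat j - 1)) gchoose (b j - 1))"
    by (rule sum.inter_filter[symmetric]) simp
  also have "{j\<in>{1..r}. j \<le> s} = {1..s}" using assms(1) by auto
  finally show ?thesis unfolding Gotz_expr_def by simp
qed

lemma gotz_split:
  fixes b :: "nat \<Rightarrow> nat" and t :: rat
  assumes "s \<le> r" "\<forall>j\<in>{1..r}. (0 < b j \<longleftrightarrow> j \<le> s)"
  shows "Gotz_expr r b t = Gotz_expr s b t + of_nat (r - s)"
proof -
  have "{1..r} = {1..s} \<union> {s+1..r}" using assms(1) by auto
  then have "Gotz_expr r b t = Gotz_expr s b t + (\<Sum>j=s+1..r. (t + of_nat (b j) - (of_nat j - 1)) gchoose (b j))"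
    unfolding Gotz_expr_def by (simp add: sum.union_disjoint)
  also have "(\<Sum>j=s+1..r. (t + of_nat (b j) - (of_nat j - 1)) gchoose (b j)) = (\<Sum>j=s+1..r. 1)"
  proof (intro sum.cong refl)
    fix x assume x: "x \<in> {s+1..r}"
    then have "x \<in> {1..r}" by auto
    then have "0 < b x \<longleftrightarrow> x \<le> s" using assms(2) by blast
    then have "b x = 0" using x by auto
    then show "(t + of_nat (b x) - (of_nat x - 1)) gchoose (b x) = 1" by simp
  qed
  finally show ?thesis by simp
qed

lemma gotz_all_zero:
  assumes "\<forall>j\<in>{1..r}. b j = 0"
  shows "Gotz_expr r b t = of_nat r"
proof -
  have "Gotz_expr r b t = (\<Sum>j=1..r. 1)" unfolding Gotz_expr_def
    using assms by (intro sum.cong refl) auto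
  then show ?thesis by simp
qed

lemma gotz_unique:
  fixes b b' :: "nat \<Rightarrow> nat"
  assumes "\<forall>j\<in>{1..r}. b j \<le> N" "\<forall>j\<in>{1..r'}. b' j \<le> N"
    "\<forall>j. 1 \<le> j \<and> j < r \<longrightarrow> b (Suc j) \<le> b j"
    "\<forall>j. 1 \<le> j \<and> j < r' \<longrightarrow> b' (Suc j) \<le> b' j"
    "\<forall>t::rat. Gotz_expr r b t = Gotz_expr r' b' t"
  shows "r = r' \<and> (\<forall>j\<in>{1..r}. b j = b' j)"
  using assms
proof (induction N arbitrary: r r' b b')
  case 0
  then have z: "\<forall>j\<in>{1..r}. b j = 0" "\<forall>j\<in>{1..r'}. b' j = 0" by auto
  have "(of_nat r :: rat) = of_nat r'"
    using 0(5) gotz_all_zero[OF z(1)] gotz_all_zero[OF z(2)] by metis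
  then have "r = r'" by simp
  then show ?case using z by auto
next
  case (Suc N)
  obtain s where s: "s \<le> r" "\<forall>j\<in>{1..r}. (0 < b j \<longleftrightarrow> j \<le> s)"
    using prefix_exists[OF Suc.prems(3)] by blast
  obtain s' where s': "s' \<le> r'" "\<forall>j\<in>{1..r'}. (0 < b' j \<longleftrightarrow> j \<le> s')"
    using prefix_exists[OF Suc.prems(4)] by blast
  have eqd: "\<forall>t::rat. Gotz_expr s (\<lambda>j. b j - 1) t = Gotz_expr s' (\<lambda>j. b' j - 1) t"
  proof
    fix t :: rat
    show "Gotz_expr s (\<lambda>j. b j - 1) t = Gotz_expr s' (\<lambda>j. b' j - 1) t"
      using gotz_delta[OF s, of t] gotz_delta[OF s', of t] Suc.prems(5) by metis
  qed
  have IH: "s = s' \<and> (\<forall>j\<in>{1..s}. b j - 1 = b' j - 1)"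
  proof (rule Suc.IH)
    show "\<forall>j\<in>{1..s}. b j - 1 \<le> N" proof
      fix j assume "j \<in> {1..s}" then have "b j \<le> Suc N" using Suc.prems(1) s(1) by auto
      then show "b j - 1 \<le> N" by simp
    qed
    show "\<forall>j\<in>{1..s'}. b' j - 1 \<le> N" proof
      fix j assume "j \<in> {1..s'}" then have "b' j \<le> Suc N" using Suc.prems(2) s'(1) by auto
      then show "b' j - 1 \<le> N" by simp
    qed
    show "\<forall>j. 1 \<le> j \<and> j < s \<longrightarrow> b (Suc j) - 1 \<le> b j - 1"
      using Suc.prems(3) s(1) by (simp add: diff_le_mono)
    show "\<forall>j. 1 \<le> j \<and> j < s' \<longrightarrow> b' (Suc j) - 1 \<le> b' j - 1"
      using Suc.prems(4) s'(1) by (simp add: diff_le_mono)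
  qed (rule eqd)
  have ss: "s = s'" using IH by simp
  have bj: "\<forall>j\<in>{1..s}. b j = b' j"
  proof
    fix j assume j: "j \<in> {1..s}"
    have "0 < b j" using s j by auto
    moreover have "0 < b' j" using s' j ss by auto
    moreover have "b j - 1 = b' j - 1" using IH j by blast
    ultimately show "b j = b' j" by simp
  qed
  have gs: "\<And>t. Gotz_expr s b t = Gotz_expr s b' t"
    unfolding Gotz_expr_def using bj by (intro sum.cong refl) auto
  have "(of_nat (r - s) :: rat) = of_nat (r' - s)"
    using gotz_split[OF s, of 0] gotz_split[OF s', of 0] Suc.prems(5) gs ss by (metis add_left_cancel)
  then have rr: "r = r'" using s(1) s'(1) ss by simp
  have "\<forall>j\<in>{1..r}. b j = b' j"
  proof
    fix j assume j: "j \<in> {1..r}"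
    show "b j = b' j"
    proof (cases "j \<le> s")
      case True then show ?thesis using bj j by auto
    next
      case False then show ?thesis using s(2) s'(2) j rr ss by fastforce
    qed
  qed
  then show ?case using rr by simp
qed

theorem lemma2p4:
  fixes d r :: nat and e b :: "nat \<Rightarrow> nat"
  assumes e_mono: "\<forall>i<d. e (Suc i) \<le> e i"
    and e_pos: "e d > 0"
    and b_mono: "\<forall>j. 1 \<le> j \<and> j < r \<longrightarrow> b (Suc j) \<le> b j"
    and same_poly: "\<forall>t::rat. MH_expr d e t = Gotz_expr r b t"
  shows "r = e 0
    \<and> (\<forall>i\<in>{1..d}. card {j\<in>{1..r}. b j = i} = e i - (if i = d then 0 else e (Suc i)))
    \<and> (\<forall>j\<in>{1..r}. b j \<le> d)"
proof -
  have em: "\<forall>i. 0 \<le> i \<and> i < d \<longrightarrow> e (Suc i) \<le> e i" using e_mono by auto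
  have echain: "\<And>i k. i \<le> k \<Longrightarrow> k \<le> d \<Longrightarrow> e k \<le> e i"
    by (rule chain_le[OF em]) auto
  define bs where "bs j = card {k\<in>{1..d}. j \<le> e k}" for j
  have bs_le: "\<And>j. bs j \<le> d"
  proof -
    fix j have "bs j \<le> card {1..d}" unfolding bs_def by (rule card_mono) auto
    then show "bs j \<le> d" by simp
  qed
  have K: "\<And>i j. 1 \<le> i \<Longrightarrow> (i \<le> bs j \<longleftrightarrow> i \<le> d \<and> j \<le> e i)"
  proof -
    fix i j :: nat assume i1: "1 \<le> i"
    show "i \<le> bs j \<longleftrightarrow> i \<le> d \<and> j \<le> e i"
    proof
      assume h: "i \<le> bs j"
      then have id: "i \<le> d" using bs_le[of j] by linarith
      show "i \<le> d \<and> j \<le> e i"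
      proof (rule ccontr)
        assume "\<not> (i \<le> d \<and> j \<le> e i)"
        then have lt: "e i < j" using id by simp
        have "{k\<in>{1..d}. j \<le> e k} \<subseteq> {1..i-1}"
        proof
          fix k assume k: "k \<in> {k\<in>{1..d}. j \<le> e k}"
          have "\<not> i \<le> k"
          proof
            assume "i \<le> k" then have "e k \<le> e i" using echain k by auto
            then show False using k lt by auto
          qed
          then show "k \<in> {1..i-1}" using k by auto
        qed
        then have "bs j \<le> card {1..i-1}" unfolding bs_def by (intro card_mono) auto
        then show False using h i1 by simp
      qed
    next
      assume h: "i \<le> d \<and> j \<le> e i"
      have "{1..i} \<subseteq> {k\<in>{1..d}. j \<le> e k}"
      proof
        fix k assume k: "k \<in> {1..i}"
        then have "e i \<le> e k" using echain h by auto
        then show "k \<in> {k\<in>{1..d}. j \<le> e k}" using k h by auto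
      qed
      then have "card {1..i} \<le> bs j" unfolding bs_def by (intro card_mono) auto
      then show "i \<le> bs j" by simp
    qed
  qed
  have ei0: "\<And>i. i \<le> d \<Longrightarrow> e i \<le> e 0" by (rule echain) auto
  define g where "g t i j = ((t::rat) + of_nat i - of_nat j) gchoose i" for t i j
  have MHG: "MH_expr d e t = Gotz_expr (e 0) bs t" for t
  proof -
    have "MH_expr d e t = (\<Sum>i=0..d. \<Sum>j=1..e i. g t i j)"
      unfolding MH_expr_def g_def mh_term by simp
    also have "\<dots> = (\<Sum>i\<in>{0..d}. \<Sum>j\<in>{j\<in>{1..e 0}. i \<le> bs j}. g t i j)"
    proof (intro sum.cong refl)
      fix i assume i: "i \<in> {0..d}"
      show "{1..e i} = {j\<in>{1..e 0}. i \<le> bs j}"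
      proof (cases "i = 0")
        case True then show ?thesis by auto
      next
        case False
        show ?thesis
        proof (rule set_eqI)
          fix j
          have a: "i \<le> bs j \<longleftrightarrow> j \<le> e i" using K[of i j] i False by simp
          show "j \<in> {1..e i} \<longleftrightarrow> j \<in> {j\<in>{1..e 0}. i \<le> bs j}"
            using a ei0[of i] i by auto
        qed
      qed
    qed
    also have "\<dots> = (\<Sum>j\<in>{1..e 0}. \<Sum>i\<in>{i\<in>{0..d}. i \<le> bs j}. g t i j)"
      by (rule sum.swap_restrict[symmetric]) auto
    also have "\<dots> = (\<Sum>j\<in>{1..e 0}. \<Sum>i\<in>{0..bs j}. g t i j)"
    proof (intro sum.cong refl)
      fix j show "{i\<in>{0..d}. i \<le> bs j} = {0..bs j}" using bs_le[of j] by auto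
    qed
    also have "\<dots> = Gotz_expr (e 0) bs t"
      unfolding Gotz_expr_def g_def gotz_term by simp
    finally show ?thesis .
  qed
  define N where "N = d + (\<Sum>j=1..r. b j)"
  have bsmono: "\<forall>j. 1 \<le> j \<and> j < e 0 \<longrightarrow> bs (Suc j) \<le> bs j"
    unfolding bs_def by (auto intro!: card_mono)
  have U: "e 0 = r \<and> (\<forall>j\<in>{1..e 0}. bs j = b j)"
  proof (rule gotz_unique[where r="e 0" and b=bs and r'=r and b'=b and N=N])
    show "\<forall>j\<in>{1..e 0}. bs j \<le> N" proof
      fix j show "bs j \<le> N" unfolding N_def using bs_le[of j] by linarith
    qed
    show "\<forall>j\<in>{1..r}. b j \<le> N"
    proof
      fix j assume "j \<in> {1..r}"
      then have "b j \<le> (\<Sum>j=1..r. b j)" by (rule member_le_sum) simp_all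
      then show "b j \<le> N" unfolding N_def by simp
    qed
    show "\<forall>t. Gotz_expr (e 0) bs t = Gotz_expr r b t" proof
      fix t show "Gotz_expr (e 0) bs t = Gotz_expr r b t" using MHG[of t] same_poly by metis
    qed
    show "\<forall>j. 1 \<le> j \<and> j < e 0 \<longrightarrow> bs (Suc j) \<le> bs j" by (rule bsmono)
    show "\<forall>j. 1 \<le> j \<and> j < r \<longrightarrow> b (Suc j) \<le> b j" by (rule b_mono)
  qed
  have r0: "r = e 0" using U by simp
  have bb: "\<And>j. j \<in> {1..r} \<Longrightarrow> b j = bs j"
  proof -
    fix j assume "j \<in> {1..r}"
    then have "j \<in> {1..e 0}" using r0 by simp
    then show "b j = bs j" using U by simp
  qed
  have part3: "\<forall>j\<in>{1..r}. b j \<le> d" using bb bs_le by simp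
  have part2: "\<forall>i\<in>{1..d}. card {j\<in>{1..r}. b j = i} = e i - (if i = d then 0 else e (Suc i))"
  proof
    fix i assume i: "i \<in> {1..d}"
    have "{j\<in>{1..r}. b j = i} = {j\<in>{1..e 0}. bs j = i}" unfolding r0[symmetric] using bb by auto
    also have "\<dots> = {j\<in>{1..e 0}. i \<le> bs j \<and> \<not> Suc i \<le> bs j}" by auto
    also have "\<dots> = {(if i = d then 0 else e (Suc i)) + 1 .. e i}"
    proof (rule set_eqI)
      fix j
      have a: "i \<le> bs j \<longleftrightarrow> j \<le> e i" using K[of i j] i by simp
      have c: "Suc i \<le> bs j \<longleftrightarrow> Suc i \<le> d \<and> j \<le> e (Suc i)" using K[of "Suc i" j] by simp
      have ei: "e i \<le> e 0" using ei0[of i] i by simp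
      show "j \<in> {j\<in>{1..e 0}. i \<le> bs j \<and> \<not> Suc i \<le> bs j}
          \<longleftrightarrow> j \<in> {(if i = d then 0 else e (Suc i)) + 1 .. e i}"
      proof (cases "i = d")
        case True
        have "\<not> Suc i \<le> d" using True by simp
        then show ?thesis unfolding mem_Collect_eq atLeastAtMost_iff a c if_P[OF True] using ei by auto
      next
        case False
        then have "Suc i \<le> d" using i by simp
        have "e (Suc i) \<le> e i" using e_mono \<open>Suc i \<le> d\<close> by simp
        then show ?thesis unfolding mem_Collect_eq atLeastAtMost_iff a c if_not_P[OF False] using ei \<open>Suc i \<le> d\<close> by auto
      qed
    qed
    finally show "card {j\<in>{1..r}. b j = i} = e i - (if i = d then 0 else e (Suc i))" by simp
  qed
  show ?thesis using r0 part2 part3 by blast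
qed

end
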